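(* For each integer $r\geq 2$ let $\mathfrak{C}_r$ be the structure $(\mathbb{Z};0,+,\leq,P_2^r)$ in the language $\{0,+,\leq,R_2\}$, where $R_2$ is a unary relation symbol interpreted as $P_2^r(x)$: "$x$ is the square of an integer and $r$ does not divide $x$". Then there is a single positive existential formula in the language $\{0,+,R_2\}$ which, in every structure $\mathfrak{C}_r$ with $r\geq 2$, defines the relation $\leq$ on $\mathbb{Z}$. (That is, $\leq$ is uniformly positive existentially $\{0,+,R_2\}$-definable in the class $\{\mathfrak{C}_r : r\geq 2\}$.) *)

theory Defs
  imports Main
begin

datatype tm = TVar nat | TZero | TAdd tm tm

datatype pef = PEq tm tm | PR2 tm | PAnd pef pef | POr pef pef | PEx nat pef

fun tval :: "(nat \<Rightarrow> int) \<Rightarrow> tm \<Rightarrow> int" where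
  "tval e (TVar i) = e i"
| "tval e TZero = 0"
| "tval e (TAdd s t) = tval e s + tval e t"

definition P2 :: "int \<Rightarrow> int \<Rightarrow> bool" where
  "P2 r x \<longleftrightarrow> (\<exists>k::int. x = k ^ 2) \<and> \<not> r dvd x"

fun sat :: "int \<Rightarrow> (nat \<Rightarrow> int) \<Rightarrow> pef \<Rightarrow> bool" where
  "sat r e (PEq s t) = (tval e s = tval e t)"
| "sat r e (PR2 t) = P2 r (tval e t)"
| "sat r e (PAnd f g) = (sat r e f \<and> sat r e g)"
| "sat r e (POr f g) = (sat r e f \<or> sat r e g)"
| "sat r e (PEx v f) = (\<exists>a::int. sat r (e(v := a)) f)"

end

theory Submission
  imports Defs "HOL-Computational_Algebra.Primes"
begin


definition sum4 :: "int \<Rightarrow> bool" where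
  "sum4 n \<longleftrightarrow> (\<exists>a b c d. n = a^2 + b^2 + c^2 + d^2)"

lemma euler4:
  fixes a b c d w x y z :: int
  shows "(a^2+b^2+c^2+d^2)*(w^2+x^2+y^2+z^2) =
   (a*w+b*x+c*y+d*z)^2 + (a*x-b*w+c*z-d*y)^2 + (a*y-b*z-c*w+d*x)^2 + (a*z+b*y-c*x-d*w)^2"
  by (simp add: power2_eq_square algebra_simps)

lemma sum4_mult: "sum4 m \<Longrightarrow> sum4 n \<Longrightarrow> sum4 (m*n)"
  unfolding sum4_def using euler4 by metis

lemma halve:
  fixes a b c d m p :: int
  assumes "m*p = a^2+b^2+c^2+d^2" "even (a+b)" "even (c+d)" "m = 2*k"
  shows "sum4 (k*p)"
proof -
  obtain u where u: "a + b = 2*u" using assms(2) by (rule evenE)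
  obtain v where v: "c + d = 2*v" using assms(3) by (rule evenE)
  have a: "a = 2*u - b" using u by simp
  have c: "c = 2*v - d" using v by simp
  have "2*(k*p) = 2*(u^2 + (u-b)^2 + v^2 + (v-d)^2)"
    using assms(1,4) unfolding a c by (simp add: power2_eq_square algebra_simps)
  then have "k*p = u^2 + (u-b)^2 + v^2 + (v-d)^2" by simp
  then show ?thesis unfolding sum4_def by blast
qed

lemma even_case:
  fixes a b c d m p :: int
  assumes "m*p = a^2+b^2+c^2+d^2" "m = 2*k"
  shows "sum4 (k*p)"
proof -
  have ev: "even (a^2+b^2+c^2+d^2)" using assms by (metis dvd_triv_left mult.assoc)
  hence "even (a+b+c+d)" by (simp add: even_add)
  hence "(even (a+b) \<and> even (c+d)) \<or> (even (a+c) \<and> even (b+d)) \<or> (even (a+d) \<and> even (c+b))"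
    by (auto simp add: even_add)
  moreover have "m*p = a^2+c^2+b^2+d^2" "m*p = a^2+d^2+c^2+b^2" using assms(1) by simp_all
  ultimately show ?thesis using halve assms by blast
qed

lemma odd_descent:
  fixes x1 x2 x3 x4 m p :: int
  assumes mp: "m*p = x1^2+x2^2+x3^2+x4^2" and "odd m" "1 < m" "m < p" and pr: "prime p"
  shows "\<exists>s. 0 < s \<and> s < m \<and> sum4 (s*p)"
proof -
  define h where "h = m div 2"
  have mh: "m = 2*h+1" using \<open>odd m\<close> unfolding h_def by presburger
  define red where "red = (\<lambda>x. ((x + h) mod m) - h)"
  define k where "k = (\<lambda>x. ((x + h) div m))"
  have redk: "red x = x - m * k x" for x
    unfolding red_def k_def by (simp add: minus_mult_div_eq_mod [symmetric] algebra_simps)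
  have bnd: "4 * (red x)^2 < m^2" for x
  proof -
    have "0 \<le> (x + h) mod m" "(x + h) mod m < m" using \<open>1 < m\<close> by simp_all
    hence "-h \<le> red x" "red x \<le> h" unfolding red_def using mh by linarith+
    hence "\<bar>red x\<bar> \<le> h" by simp
    hence "(red x)^2 \<le> h^2" by (metis abs_ge_zero power2_abs power_mono)
    moreover have "h \<ge> 0" using mh \<open>1 < m\<close> by simp
    moreover have "m^2 = 4*h^2 + 4*h + 1" using mh by (simp add: power2_eq_square algebra_simps)
    ultimately show ?thesis by linarith
  qed
  define y1 where "y1 = red x1"
  define y2 where "y2 = red x2"
  define y3 where "y3 = red x3"
  define y4 where "y4 = red x4"
  define k1 where "k1 = k x1"
  define k2 where "k2 = k x2"
  define k3 where "k3 = k x3"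
  define k4 where "k4 = k x4"
  have y1: "y1 = x1 - m*k1" and y2: "y2 = x2 - m*k2" and y3: "y3 = x3 - m*k3" and y4: "y4 = x4 - m*k4"
    using redk unfolding y1_def y2_def y3_def y4_def k1_def k2_def k3_def k4_def by auto
  define s where "s = p - 2*(x1*k1+x2*k2+x3*k3+x4*k4) + m*(k1^2+k2^2+k3^2+k4^2)"
  have ys: "y1^2+y2^2+y3^2+y4^2 = m*s"
    unfolding y1 y2 y3 y4 s_def using mp by (simp add: power2_eq_square algebra_simps)
  have "4*(y1^2+y2^2+y3^2+y4^2) < 4*m^2"
    using bnd[of x1] bnd[of x2] bnd[of x3] bnd[of x4] unfolding y1_def y2_def y3_def y4_def by simp
  hence "m*s < m*m" using ys by (simp add: power2_eq_square)
  hence slt: "s < m" using \<open>1 < m\<close> by simp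
  have "0 \<le> m*s" unfolding ys[symmetric] by simp
  hence s0: "0 \<le> s" using \<open>1 < m\<close> by (simp add: zero_le_mult_iff)
  have sne: "s \<noteq> 0"
  proof
    assume "s = 0"
    hence "y1^2+y2^2+y3^2+y4^2 = 0" using ys by simp
    hence "y1 = 0 \<and> y2 = 0 \<and> y3 = 0 \<and> y4 = 0" by (simp add: sum_power2_eq_zero_iff add_nonneg_eq_0_iff)
    hence "m*p = m*(m*(k1^2+k2^2+k3^2+k4^2))" using mp y1 y2 y3 y4 by (simp add: power2_eq_square algebra_simps)
    hence "p = m*(k1^2+k2^2+k3^2+k4^2)" using \<open>1 < m\<close> by simp
    hence "m dvd p" by simp
    moreover have "\<forall>m. 0 \<le> m \<and> m dvd p \<longrightarrow> m = 1 \<or> m = p" using pr prime_int_iff by blast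
    moreover have "0 \<le> m" using \<open>1 < m\<close> by simp
    ultimately have "m = 1 \<or> m = p" by blast
    thus False using \<open>1 < m\<close> \<open>m < p\<close> by auto
  qed
  define w1 where "w1 = p - (x1*k1+x2*k2+x3*k3+x4*k4)"
  define w2 where "w2 = -(x1*k2 - x2*k1 + x3*k4 - x4*k3)"
  define w3 where "w3 = -(x1*k3 - x2*k4 - x3*k1 + x4*k2)"
  define w4 where "w4 = -(x1*k4 + x2*k3 - x3*k2 - x4*k1)"
  have e1: "x1*y1+x2*y2+x3*y3+x4*y4 = m*w1" unfolding w1_def y1 y2 y3 y4
    using mp by (simp add: power2_eq_square algebra_simps)
  have e2: "x1*y2-x2*y1+x3*y4-x4*y3 = m*w2" unfolding w2_def y1 y2 y3 y4
    by (simp add: algebra_simps)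
  have e3: "x1*y3-x2*y4-x3*y1+x4*y2 = m*w3" unfolding w3_def y1 y2 y3 y4
    by (simp add: algebra_simps)
  have e4: "x1*y4+x2*y3-x3*y2-x4*y1 = m*w4" unfolding w4_def y1 y2 y3 y4
    by (simp add: algebra_simps)
  have "(m*p)*(m*s) = (m*w1)^2+(m*w2)^2+(m*w3)^2+(m*w4)^2"
    using euler4[of x1 x2 x3 x4 y1 y2 y3 y4] unfolding mp ys[symmetric] e1 e2 e3 e4 by simp
  hence "(m*m)*(s*p) = (m*m)*(w1^2+w2^2+w3^2+w4^2)" by (simp add: power2_eq_square algebra_simps)
  hence "s*p = w1^2+w2^2+w3^2+w4^2" using \<open>1 < m\<close> by simp
  hence "sum4 (s*p)" unfolding sum4_def by blast
  moreover have "0 < s" using s0 sne by simp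
  ultimately show ?thesis using slt by blast
qed

lemma prime_descent:
  fixes p :: int assumes pr: "prime p"
  shows "\<forall>m. 0 < m \<longrightarrow> m < p \<longrightarrow> sum4 (m*p) \<longrightarrow> sum4 p"
proof -
  have "\<forall>m. nat m = N \<longrightarrow> 0 < m \<longrightarrow> m < p \<longrightarrow> sum4 (m*p) \<longrightarrow> sum4 p" for N
  proof (induction N rule: less_induct)
    case (less N)
    show ?case
    proof (intro allI impI)
      fix m assume mN: "nat m = N" and m0: "0 < m" and mp: "m < p" and s: "sum4 (m*p)"
      show "sum4 p"
      proof (cases "m = 1")
        case True thus ?thesis using s by simp
      next
        case False
        hence m1: "1 < m" using m0 by simp
        obtain a b c d where abcd: "m*p = a^2+b^2+c^2+d^2" using s unfolding sum4_def by blast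
        show ?thesis
        proof (cases "even m")
          case True
          then obtain k where k: "m = 2*k" by (auto elim!: evenE)
          have "sum4 (k*p)" using even_case[OF abcd k] .
          moreover have "nat k < N" "0 < k" "k < p" using k m1 mN mp by auto
          ultimately show ?thesis using less by blast
        next
          case False
          obtain s' where "0 < s'" "s' < m" "sum4 (s'*p)" using odd_descent[OF abcd False m1 mp pr] by blast
          moreover have "nat s' < N" using \<open>0 < s'\<close> \<open>s' < m\<close> mN by auto
          ultimately show ?thesis using less mp by auto
        qed
      qed
    qed
  qed
  thus ?thesis by blast
qed

lemma small_dvd: "(p::int) dvd t \<Longrightarrow> \<bar>t\<bar> < p \<Longrightarrow> t = 0"
proof -
  assume "p dvd t" "\<bar>t\<bar> < p"
  then obtain q where q: "t = p*q" by (auto elim!: dvdE)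
  show "t = 0"
  proof (rule ccontr)
    assume "t \<noteq> 0"
    hence "q \<noteq> 0" using q by simp
    hence "1 \<le> \<bar>q\<bar>" by simp
    moreover have "p > 0" using \<open>\<bar>t\<bar> < p\<close> by simp
    ultimately have "p * 1 \<le> p * \<bar>q\<bar>" by (intro mult_left_mono) auto
    thus False using \<open>\<bar>t\<bar> < p\<close> q \<open>p > 0\<close> by (simp add: abs_mult)
  qed
qed

lemma prime_sum4:
  fixes p :: int assumes pr: "prime p" shows "sum4 p"
proof (cases "p = 2")
  case True thus ?thesis unfolding sum4_def by (intro exI[of _ 1] exI[of _ 0]) simp
next
  case False
  have p2: "p > 2" using False prime_ge_2_int[OF pr] by simp
  hence "odd p" using prime_odd_int pr by blast
  define h where "h = p div 2"
  have ph: "p = 2*h+1" using \<open>odd p\<close> unfolding h_def by presburger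
  have h1: "h \<ge> 1" using ph p2 by simp
  define A where "A = (\<lambda>x. x^2 mod p) ` {0..h}"
  define B where "B = (\<lambda>y. (-1 - y^2) mod p) ` {0..h}"
  have key: "x = y" if "x \<in> {0..h}" "y \<in> {0..h}" "p dvd x^2 - y^2" for x y
  proof -
    have "x^2 - y^2 = (x-y)*(x+y)" by (simp add: power2_eq_square algebra_simps)
    hence "p dvd (x-y) \<or> p dvd (x+y)" using that(3) pr prime_dvd_mult_iff by metis
    moreover have "\<bar>x - y\<bar> < p" "0 \<le> x + y" "x + y < p" using that ph by auto
    ultimately have "x - y = 0 \<or> x + y = 0" using small_dvd[of p "x-y"] small_dvd[of p "x+y"] by auto
    thus ?thesis using that(1,2) by auto
  qed
  have injA: "inj_on (\<lambda>x. x^2 mod p) {0..h}"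
    by (rule inj_onI) (use key in \<open>simp add: mod_eq_dvd_iff\<close>)
  have injB: "inj_on (\<lambda>y. (-1 - y^2) mod p) {0..h}"
  proof (rule inj_onI)
    fix x y assume xy: "x \<in> {0..h}" "y \<in> {0..h}" "(-1 - x^2) mod p = (-1 - y^2) mod p"
    hence "p dvd (-1 - x^2) - (-1 - y^2)" by (simp add: mod_eq_dvd_iff)
    hence "p dvd y^2 - x^2" by simp
    thus "x = y" using key xy by metis
  qed
  have cA: "card A = nat h + 1" unfolding A_def using card_image[OF injA] h1 by simp
  have cB: "card B = nat h + 1" unfolding B_def using card_image[OF injB] h1 by simp
  have sub: "A \<union> B \<subseteq> {0..<p}" unfolding A_def B_def using p2 by auto
  have "A \<inter> B \<noteq> {}"
  proof
    assume "A \<inter> B = {}"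
    hence "card (A \<union> B) = card A + card B" by (simp add: card_Un_disjoint A_def B_def)
    moreover have "card (A \<union> B) \<le> card {0..<p}" using sub by (intro card_mono) auto
    ultimately show False using cA cB ph h1 by simp
  qed
  then obtain z where "z \<in> A" "z \<in> B" by blast
  then obtain x y where xy: "x \<in> {0..h}" "y \<in> {0..h}" "x^2 mod p = (-1 - y^2) mod p"
  proof -
    assume r: "\<And>x y. x \<in> {0..h} \<Longrightarrow> y \<in> {0..h} \<Longrightarrow> x^2 mod p = (-1 - y^2) mod p \<Longrightarrow> thesis"
    from \<open>z \<in> A\<close> obtain x where x: "x \<in> {0..h}" "z = x^2 mod p" unfolding A_def by blast
    from \<open>z \<in> B\<close> obtain y where y: "y \<in> {0..h}" "z = (-1 - y^2) mod p" unfolding B_def by blast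
    show thesis using r[OF x(1) y(1)] x(2) y(2) by simp
  qed
  hence "p dvd x^2 - (-1 - y^2)" by (simp only: mod_eq_dvd_iff)
  moreover have "x^2 - (-1 - y^2) = x^2 + y^2 + 1" by simp
  ultimately have "p dvd x^2 + y^2 + 1" by simp
  then obtain m where m: "x^2 + y^2 + 1 = p * m" by (auto elim!: dvdE)
  have "x^2 \<le> h^2" "y^2 \<le> h^2" using xy by (auto intro!: power_mono)
  hence "p*m \<le> 2*h^2 + 1" using m by linarith
  moreover have "p*p = 4*h^2+4*h+1" by (simp add: ph power2_eq_square algebra_simps)
  moreover have "0 \<le> h^2" by simp
  ultimately have "p*m < p*p" using h1 by linarith
  hence mlt: "m < p" using p2 by simp
  have "0 < p*m" unfolding m[symmetric] by (simp add: add_pos_nonneg)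
  hence "0 < m" using p2 by (simp add: zero_less_mult_iff)
  moreover have "sum4 (m*p)" unfolding sum4_def using m
    by (intro exI[of _ x] exI[of _ y] exI[of _ 1] exI[of _ 0]) (simp add: algebra_simps)
  ultimately show ?thesis using prime_descent[OF pr] mlt by blast
qed

lemma lagrange_nat: "sum4 (int n)"
proof (induction n rule: less_induct)
  case (less n)
  show ?case
  proof (cases "n \<le> 1")
    case True
    then consider "n = 0" | "n = 1" by linarith
    thus ?thesis
    proof cases
      case 1 thus ?thesis unfolding sum4_def by (intro exI[of _ 0]) simp
    next
      case 2 thus ?thesis unfolding sum4_def by (intro exI[of _ 1] exI[of _ 0]) simp
    qed
  next
    case False
    then obtain p where p: "prime p" "p dvd n" using prime_factor_nat[of n] by auto
    then obtain k where k: "n = p * k" by (auto elim!: dvdE)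
    have "p > 1" using p prime_gt_1_nat by blast
    hence "k < n" using k False by (cases "k = 0") auto
    hence "sum4 (int k)" using less by blast
    moreover have "sum4 (int p)" using prime_sum4 p(1) by (simp add: prime_nat_int_transfer)
    ultimately show ?thesis using sum4_mult k by (metis of_nat_mult)
  qed
qed

lemma lagrange: "0 \<le> (n::int) \<Longrightarrow> \<exists>a b c d. n = a^2 + b^2 + c^2 + d^2"
  using lagrange_nat[of "nat n"] unfolding sum4_def by simp


fun exs :: "nat list \<Rightarrow> pef \<Rightarrow> pef" where
  "exs [] f = f"
| "exs (v#vs) f = PEx v (exs vs f)"

fun conjQ :: "nat list \<Rightarrow> pef" where
  "conjQ [] = PEq TZero TZero"
| "conjQ (v#vs) = PAnd (POr (PEq (TVar v) TZero) (PR2 (TVar v))) (conjQ vs)"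

fun sumv :: "nat list \<Rightarrow> tm" where
  "sumv [] = TZero"
| "sumv (v#vs) = TAdd (TVar v) (sumv vs)"

lemma sat_exs: "sat r e (exs vs f) \<longleftrightarrow> (\<exists>e'. (\<forall>i. i \<notin> set vs \<longrightarrow> e' i = e i) \<and> sat r e' f)"
proof (induction vs arbitrary: e)
  case Nil
  then show ?case by auto
next
  case (Cons v vs)
  show ?case
  proof
    assume "sat r e (exs (v#vs) f)"
    then obtain a where "sat r (e(v:=a)) (exs vs f)" by auto
    then obtain e' where "\<forall>i. i \<notin> set vs \<longrightarrow> e' i = (e(v:=a)) i" "sat r e' f" using Cons.IH by blast
    thus "\<exists>e'. (\<forall>i. i \<notin> set (v#vs) \<longrightarrow> e' i = e i) \<and> sat r e' f"
      by (intro exI[of _ e']) auto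
  next
    assume "\<exists>e'. (\<forall>i. i \<notin> set (v#vs) \<longrightarrow> e' i = e i) \<and> sat r e' f"
    then obtain e' where e': "\<forall>i. i \<notin> set (v#vs) \<longrightarrow> e' i = e i" "sat r e' f" by blast
    have "\<forall>i. i \<notin> set vs \<longrightarrow> e' i = (e(v := e' v)) i" using e'(1) by auto
    hence "sat r (e(v := e' v)) (exs vs f)" using Cons.IH e'(2) by blast
    thus "sat r e (exs (v#vs) f)" by auto
  qed
qed

lemma sat_conjQ: "sat r e (conjQ vs) \<longleftrightarrow> (\<forall>v\<in>set vs. e v = 0 \<or> P2 r (e v))"
  by (induction vs) auto

lemma tval_sumv: "tval e (sumv vs) = sum_list (map e vs)"
  by (induction vs) auto

lemma not_dvd_nb:
  fixes r a :: int assumes "r \<ge> 2" "r dvd a^2" "b = a + 1 \<or> b = a - 1"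
  shows "\<not> r dvd b^2"
proof
  assume "r dvd b^2"
  have "coprime a b" using assms(3) by auto
  hence "coprime (a^2) (b^2)" by simp
  hence "is_unit r" using assms(2) \<open>r dvd b^2\<close> coprime_common_divisor by blast
  thus False using assms(1) by simp
qed

definition gq :: "int \<Rightarrow> int \<Rightarrow> int list" where
  "gq r a = (if r dvd a^2 then [(a+1)^2, (a-1)^2, 0, 0] else [a^2, a^2, 1, 1])"

lemma gq_props:
  assumes "r \<ge> 2"
  shows "length (gq r a) = 4" "sum_list (gq r a) = 2*a^2 + 2"
        "\<forall>t\<in>set (gq r a). t = 0 \<or> P2 r t"
proof -
  show "length (gq r a) = 4" unfolding gq_def by simp
  show "sum_list (gq r a) = 2*a^2 + 2" unfolding gq_def by (simp add: power2_eq_square algebra_simps)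
  have one: "P2 r 1" unfolding P2_def using assms by (auto intro!: exI[of _ 1] dest: zdvd_imp_le)
  show "\<forall>t\<in>set (gq r a). t = 0 \<or> P2 r t"
  proof (cases "r dvd a^2")
    case True
    have "P2 r ((a+1)^2)" "P2 r ((a-1)^2)" unfolding P2_def
      using not_dvd_nb[OF assms True] by blast+
    thus ?thesis using True unfolding gq_def by simp
  next
    case False
    hence "P2 r (a^2)" unfolding P2_def by blast
    thus ?thesis using False one unfolding gq_def by simp
  qed
qed

lemma rep16:
  fixes r n :: int assumes r: "r \<ge> 2" and n: "n \<ge> 0"
  shows "\<exists>ts. length ts = 16 \<and> (\<forall>t\<in>set ts. t = 0 \<or> P2 r t) \<and> sum_list ts = 2*n"
proof (cases "n \<ge> 4")
  case True
  then obtain a b c d where abcd: "n - 4 = a^2+b^2+c^2+d^2" using lagrange[of "n-4"] by auto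
  let ?ts = "gq r a @ gq r b @ gq r c @ gq r d"
  have "length ?ts = 16" using gq_props(1)[OF r] by simp
  moreover have "\<forall>t\<in>set ?ts. t = 0 \<or> P2 r t" using gq_props(3)[OF r] by auto
  moreover have "sum_list ?ts = 2*n" using gq_props(2)[OF r] abcd by simp
  ultimately show ?thesis by blast
next
  case False
  have one: "P2 r 1" unfolding P2_def using r by (auto intro!: exI[of _ 1] dest: zdvd_imp_le)
  let ?ts = "replicate (nat (2*n)) (1::int) @ replicate (16 - nat (2*n)) 0"
  have "length ?ts = 16" using False by simp
  moreover have "\<forall>t\<in>set ?ts. t = 0 \<or> P2 r t" using one by auto
  moreover have "sum_list ?ts = 2*n" using n by (simp add: sum_list_replicate)
  ultimately show ?thesis by blast
qed

definition VS :: "nat list" where "VS = [2..<18]"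

lemma VS_props: "set VS = {2..<18}" "length VS = 16" "i < 16 \<Longrightarrow> VS ! i = i + 2"
proof -
  show "set VS = {2..<18}" unfolding VS_def by (rule set_upt)
  show "length VS = 16" unfolding VS_def length_upt by simp
  show "i < 16 \<Longrightarrow> VS ! i = i + 2" unfolding VS_def by (subst nth_upt) auto
qed

definition phi :: pef where
  "phi = exs VS (PAnd (conjQ VS)
     (PEq (TAdd (TVar 1) (TVar 1)) (TAdd (TAdd (TVar 0) (TVar 0)) (sumv VS))))"

lemma P2_nonneg: "P2 r t \<Longrightarrow> t \<ge> 0"
  unfolding P2_def by auto

theorem proposition1p4:
  shows "\<exists>\<phi>::pef. \<forall>r::int. r \<ge> 2 \<longrightarrow>
           (\<forall>e::nat \<Rightarrow> int. sat r e \<phi> \<longleftrightarrow> e 0 \<le> e 1)"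
proof (intro exI[of _ phi] allI impI)
  fix r :: int and e :: "nat \<Rightarrow> int"
  assume r: "r \<ge> 2"
  have s: "sat r e phi \<longleftrightarrow> (\<exists>e'. (\<forall>i. i \<notin> set VS \<longrightarrow> e' i = e i) \<and>
      (\<forall>v\<in>set VS. e' v = 0 \<or> P2 r (e' v)) \<and>
      e' 1 + e' 1 = e' 0 + e' 0 + sum_list (map e' VS))"
    unfolding phi_def sat_exs by (simp only: sat.simps sat_conjQ tval.simps tval_sumv)
  show "sat r e phi \<longleftrightarrow> e 0 \<le> e 1"
  proof
    assume "sat r e phi"
    then obtain e' where e': "\<forall>i. i \<notin> set VS \<longrightarrow> e' i = e i"
      "\<forall>v\<in>set VS. e' v = 0 \<or> P2 r (e' v)"
      "e' 1 + e' 1 = e' 0 + e' 0 + sum_list (map e' VS)" using s by blast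
    have "0 \<le> sum_list (map e' VS)"
      by (rule sum_list_nonneg) (use e'(2) P2_nonneg in fastforce)
    moreover have "e' 0 = e 0" "e' 1 = e 1" using e'(1) by (auto simp: VS_props)
    ultimately show "e 0 \<le> e 1" using e'(3) by linarith
  next
    assume le: "e 0 \<le> e 1"
    obtain ts where ts: "length ts = 16" "\<forall>t\<in>set ts. t = 0 \<or> P2 r t" "sum_list ts = 2*(e 1 - e 0)"
      using rep16[OF r, of "e 1 - e 0"] le by auto
    define e' where "e' = (\<lambda>i. if i \<in> set VS then ts ! (i - 2) else e i)"
    have m: "map e' VS = ts"
      by (rule nth_equalityI) (auto simp: e'_def ts(1) VS_props)
    have "\<forall>v\<in>set VS. e' v = 0 \<or> P2 r (e' v)"
    proof
      fix v assume v: "v \<in> set VS"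
      hence "e' v \<in> set ts" unfolding e'_def using ts(1) by (auto simp: VS_props)
      thus "e' v = 0 \<or> P2 r (e' v)" using ts(2) by blast
    qed
    moreover have "\<forall>i. i \<notin> set VS \<longrightarrow> e' i = e i" unfolding e'_def by (auto simp: VS_props)
    moreover have "e' 1 + e' 1 = e' 0 + e' 0 + sum_list (map e' VS)"
      unfolding m ts(3) by (simp add: e'_def VS_props)
    ultimately show "sat r e phi" using s by blast
  qed
qed


end
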